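(* Let $\mu$ be an offspring distribution, let $X,X_1,X_2,\dots$ be i.i.d. with $\mathbf P(X=i)=\mu_{i+1}$ for $i\ge-1$, and let $\Delta_n=\Delta(\mathrm T_n)$. For $N\ge0$ with $\mu(\{0,1,\dots,N\})>0$, let $X^{<N}_1,X^{<N}_2,\dots$ be i.i.d. with $\mathbf P(X^{<N}_1=i)=\mu_{i+1}/\mu(\{0,\dots,N\})$ for $i\in\{-1,0,\dots,N-1\}$ (i.e. distributed as $X$ conditioned on $X<N$). Then for every integer $n>N+1$ such that $\mathrm T_n$ is defined and the denominator below is positive, \[ \mathbf P(\Delta_n\le N)\le\frac{\mathbf P\big(X^{<N}_1+\dots+X^{<N}_n=-1\big)}{n\,\mathbf P(X_1=N)\,\mathbf P\big(X^{<N}_2+\dots+X^{<N}_n=-N-1\big)}. \]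
   Context: An offspring distribution is a probability measure $\mu=(\mu_k)_{k\ge0}$ on $\mathbb Z_+$. $\mathrm T_n$ is a $\mu$-Bienaymé (Galton–Watson) tree conditioned to have exactly $n$ vertices (defined when this event has positive probability), and $\Delta(\mathrm t)$ is the maximal number of children of a vertex of the tree $\mathrm t$. *)

theory Defs
  imports "HOL-Probability.Probability"
begin

datatype ptree = Node "ptree list"

fun nverts :: "ptree \<Rightarrow> nat" where
  "nverts (Node ts) = 1 + sum_list (map nverts ts)"

fun maxdeg :: "ptree \<Rightarrow> nat" where
  "maxdeg (Node ts) = foldr max (map maxdeg ts) (length ts)"

text \<open>P(T = t) for a mu-Bienayme tree T: product over vertices of mu(number of children).\<close>
fun gw_weight :: "nat pmf \<Rightarrow> ptree \<Rightarrow> real" where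
  "gw_weight \<mu> (Node ts) = pmf \<mu> (length ts) * prod_list (map (gw_weight \<mu>) ts)"

text \<open>T_n is defined iff P(|T| = n) > 0.\<close>
definition Tn_defined :: "nat pmf \<Rightarrow> nat \<Rightarrow> bool" where
  "Tn_defined \<mu> n \<longleftrightarrow> (\<Sum>t\<in>{t. nverts t = n}. gw_weight \<mu> t) > 0"

text \<open>P(Delta(T_n) \<le> N) = P(Delta(T) \<le> N, |T| = n) / P(|T| = n).\<close>
definition prob_maxdeg_le :: "nat pmf \<Rightarrow> nat \<Rightarrow> nat \<Rightarrow> real" where
  "prob_maxdeg_le \<mu> n N =
     (\<Sum>t\<in>{t. nverts t = n \<and> maxdeg t \<le> N}. gw_weight \<mu> t)
       / (\<Sum>t\<in>{t. nverts t = n}. gw_weight \<mu> t)"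

text \<open>Law of X, where P(X = i) = mu_{i+1}, i \<ge> -1.\<close>
definition step_pmf :: "nat pmf \<Rightarrow> int pmf" where
  "step_pmf \<mu> = map_pmf (\<lambda>k. int k - 1) \<mu>"

fun iid_sum :: "int pmf \<Rightarrow> nat \<Rightarrow> int pmf" where
  "iid_sum p 0 = return_pmf 0"
| "iid_sum p (Suc m) = bind_pmf p (\<lambda>x. map_pmf (\<lambda>s. x + s) (iid_sum p m))"

end

theory Submission
  imports Defs
begin

function preF :: "ptree list \<Rightarrow> nat list" where
  "preF [] = []"
| "preF (Node cs # ts) = length cs # preF (cs @ ts)"
  by pat_completeness auto
termination by (relation "Wellfounded.measure (\<lambda>ts. sum_list (map nverts ts))") auto

fun code :: "nat \<Rightarrow> nat list \<Rightarrow> bool" where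
  "code 0 xs = (xs = [])"
| "code (Suc k) [] = False"
| "code (Suc k) (d # ys) = code (k + d) ys"

fun dec :: "nat \<Rightarrow> nat list \<Rightarrow> ptree list" where
  "dec 0 xs = []"
| "dec (Suc k) [] = []"
| "dec (Suc k) (d # ys) = (let f = dec (k + d) ys in Node (take d f) # drop d f)"

lemma code_preF: "code (length ts) (preF ts)"
  by (induction ts rule: preF.induct) (auto simp: add.commute)

lemma dec_preF: "dec (length ts) (preF ts) = ts"
  by (induction ts rule: preF.induct) (auto simp: add.commute Let_def)

lemma preF_dec: "code k xs \<Longrightarrow> length (dec k xs) = k \<and> preF (dec k xs) = xs"
proof (induction k xs rule: dec.induct)
  case (3 k d ys)
  then have IH: "length (dec (k+d) ys) = k + d" "preF (dec (k+d) ys) = ys" by auto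
  show ?case
    using IH by (simp add: Let_def min_def)
qed auto

lemma length_preF: "length (preF ts) = sum_list (map nverts ts)"
  by (induction ts rule: preF.induct) auto

lemma prod_preF: "prod_list (map (pmf \<mu>) (preF ts)) = prod_list (map (gw_weight \<mu>) ts)"
  by (induction ts rule: preF.induct) (auto simp: mult.assoc)

lemma foldr_max_le: "foldr max xs a \<le> (N::nat) \<longleftrightarrow> a \<le> N \<and> (\<forall>x\<in>set xs. x \<le> N)"
  by (induction xs) auto

lemma maxdeg_le: "maxdeg (Node cs) \<le> N \<longleftrightarrow> length cs \<le> N \<and> (\<forall>c\<in>set cs. maxdeg c \<le> N)"
  by (simp add: foldr_max_le)

lemma set_preF: "(\<forall>x\<in>set (preF ts). x \<le> N) \<longleftrightarrow> (\<forall>t\<in>set ts. maxdeg t \<le> N)"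
  by (induction ts rule: preF.induct) (auto simp: maxdeg_le simp del: maxdeg.simps)

lemma tree_bij:
  "bij_betw (\<lambda>t. preF [t]) {t. nverts t = n \<and> P (preF [t])} {xs. code 1 xs \<and> length xs = n \<and> P xs}"
proof (rule bij_betw_byWitness[where f' = "\<lambda>xs. hd (dec 1 xs)"])
  show "\<forall>t\<in>{t. nverts t = n \<and> P (preF [t])}. hd (dec 1 (preF [t])) = t"
    using dec_preF[of "[_]"] by simp
  show "\<forall>xs\<in>{xs. code 1 xs \<and> length xs = n \<and> P xs}. preF [hd (dec 1 xs)] = xs"
  proof
    fix xs assume "xs \<in> {xs. code 1 xs \<and> length xs = n \<and> P xs}"
    then have c: "code 1 xs" by auto
    from preF_dec[OF c] obtain t where "dec 1 xs = [t]" "preF [t] = xs"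
      by (metis One_nat_def length_0_conv length_Suc_conv)
    then show "preF [hd (dec 1 xs)] = xs" by simp
  qed
  show "(\<lambda>t. preF [t]) ` {t. nverts t = n \<and> P (preF [t])} \<subseteq> {xs. code 1 xs \<and> length xs = n \<and> P xs}"
    using code_preF[of "[_]"] length_preF[of "[_]"] by auto
  show "(\<lambda>xs. hd (dec 1 xs)) ` {xs. code 1 xs \<and> length xs = n \<and> P xs} \<subseteq> {t. nverts t = n \<and> P (preF [t])}"
  proof
    fix t assume "t \<in> (\<lambda>xs. hd (dec 1 xs)) ` {xs. code 1 xs \<and> length xs = n \<and> P xs}"
    then obtain xs where xs: "code 1 xs" "length xs = n" "P xs" "t = hd (dec 1 xs)" by auto
    from preF_dec[OF xs(1)] obtain u where "dec 1 xs = [u]" "preF [u] = xs"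
      by (metis One_nat_def length_0_conv length_Suc_conv)
    then show "t \<in> {t. nverts t = n \<and> P (preF [t])}" using xs length_preF[of "[u]"] by auto
  qed
qed

definition hh :: "nat \<Rightarrow> int" where "hh x = int x - 1"
definition FF :: "nat list \<Rightarrow> nat \<Rightarrow> int" where "FF xs j = sum_list (map hh (take j xs))"

lemma sum_hh: "sum_list (map hh xs) = int (sum_list xs) - int (length xs)"
  by (induction xs) (auto simp: hh_def)

lemma code_iff: "code k xs \<longleftrightarrow> sum_list (map hh xs) = - int k \<and> (\<forall>j<length xs. FF xs j > - int k)"
proof (induction xs arbitrary: k)
  case Nil then show ?case by (cases k) auto
next
  case (Cons d ys)
  show ?case
  proof (cases k)
    case 0 then show ?thesis by (auto simp: FF_def All_less_Suc2)
  next
    case (Suc k')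
    have e: "FF (d # ys) (Suc j) = hh d + FF ys j" for j by (simp add: FF_def)
    have hd: "hh d = int d - 1" by (simp add: hh_def)
    have f0: "FF (d # ys) 0 = 0" by (simp add: FF_def)
    have "code k (d # ys) \<longleftrightarrow> code (k' + d) ys" using Suc by simp
    also have "\<dots> \<longleftrightarrow> sum_list (map hh ys) = - int (k' + d) \<and> (\<forall>j<length ys. FF ys j > - int (k' + d))"
      by (rule Cons.IH)
    also have "\<dots> \<longleftrightarrow> sum_list (map hh (d # ys)) = - int k \<and> (\<forall>j<length (d # ys). FF (d # ys) j > - int k)"
      using Suc by (simp add: All_less_Suc2 e f0 hd) (auto simp: algebra_simps)
    finally show ?thesis .
  qed
qed

lemma rotate_inj: "rotate k xs = rotate k ys \<Longrightarrow> xs = ys"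
proof -
  assume eq: "rotate k xs = rotate k ys"
  have len: "length xs = length ys" using arg_cong[OF eq, of length] by simp
  define m where "m = k mod length xs"
  from eq have "drop m xs @ take m xs = drop m ys @ take m ys" by (simp add: rotate_drop_take len m_def)
  then have "drop m xs = drop m ys \<and> take m xs = take m ys" by (simp add: append_eq_append_conv len)
  then show "xs = ys" by (metis append_take_drop_id)
qed

lemma sum_list_rotate: "sum_list (rotate k (xs :: 'a::comm_monoid_add list)) = sum_list xs"
proof -
  have "sum_list xs = sum_list (take (k mod length xs) xs @ drop (k mod length xs) xs)" by simp
  then show ?thesis by (simp only: rotate_drop_take sum_list_append add.commute)
qed

lemma prod_list_rotate: "prod_list (rotate k (xs :: 'a::comm_monoid_mult list)) = prod_list xs"
proof -
  have "prod_list xs = prod_list (take (k mod length xs) xs @ drop (k mod length xs) xs)" by simp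
  then show ?thesis by (simp only: rotate_drop_take prod_list.append mult.commute)
qed

lemma FF_rot:
  assumes "k < n" "length xs = n" "j \<le> n"
  shows "FF (rotate k xs) j = (if j \<le> n - k then FF xs (k+j) - FF xs k else FF xs n - FF xs k + FF xs (j + k - n))"
proof -
  have r: "rotate k xs = drop k xs @ take k xs" using assms by (simp add: rotate_drop_take)
  have ld: "length (drop k xs) = n - k" using assms by simp
  show ?thesis
  proof (cases "j \<le> n - k")
    case True
    then have "take j (rotate k xs) = take j (drop k xs)" using r ld by simp
    moreover have "take (k+j) xs = take k xs @ take j (drop k xs)" by (simp add: take_add)
    ultimately show ?thesis using True by (simp add: FF_def)
  next
    case False
    have jj: "j - (n - k) = j + k - n" using assms by simp
    then have "take j (rotate k xs) = drop k xs @ take (j + k - n) (take k xs)" using r ld False by simp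
    also have "take (j + k - n) (take k xs) = take (j + k - n) xs" using assms by (simp add: min_def)
    finally have t: "take j (rotate k xs) = drop k xs @ take (j + k - n) xs" .
    have tn: "take n xs = xs" using assms by simp
    have sp: "sum_list (map hh xs) = sum_list (map hh (take k xs)) + sum_list (map hh (drop k xs))"
      by (metis append_take_drop_id map_append sum_list_append)
    show ?thesis using False t tn sp by (simp add: FF_def)
  qed
qed

lemma code_rot:
  assumes len: "length xs = n" and kn: "k < n" and s: "sum_list xs + 1 = n"
  shows "code 1 (rotate k xs) \<longleftrightarrow> (\<forall>i<k. FF xs k < FF xs i) \<and> (\<forall>i. k \<le> i \<and> i < n \<longrightarrow> FF xs k \<le> FF xs i)"
proof -
  have Gn: "FF xs n = -1" using len s by (simp add: FF_def sum_hh)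
  have G0: "FF xs 0 = 0" by (simp add: FF_def)
  have sr: "sum_list (map hh (rotate k xs)) = -1"
    using Gn len by (simp add: FF_def rotate_map[symmetric] sum_list_rotate)
  have R: "FF (rotate k xs) j = (if j \<le> n - k then FF xs (k+j) - FF xs k else FF xs n - FF xs k + FF xs (j + k - n))"
    if "j \<le> n" for j using FF_rot[OF kn len that] .
  have "code 1 (rotate k xs) \<longleftrightarrow> (\<forall>j<n. FF (rotate k xs) j > -1)"
    using sr len by (simp add: code_iff)
  also have "\<dots> \<longleftrightarrow> (\<forall>i<k. FF xs k < FF xs i) \<and> (\<forall>i. k \<le> i \<and> i < n \<longrightarrow> FF xs k \<le> FF xs i)"
  proof
    assume H: "\<forall>j<n. FF (rotate k xs) j > -1"
    have A: "FF xs k < FF xs i" if "i < k" for i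
    proof (cases "i = 0")
      case True
      have "FF (rotate k xs) (n - k) > -1" using H that kn by auto
      then show ?thesis using R[of "n-k"] kn Gn G0 True by simp
    next
      case False
      define j where "j = n - k + i"
      have "FF (rotate k xs) j > -1" using H that kn j_def by auto
      moreover have "j + k - n = i" "\<not> j \<le> n - k" "j \<le> n" using that kn False j_def by auto
      ultimately show ?thesis using R[of j] Gn by simp
    qed
    have B: "FF xs k \<le> FF xs i" if "k \<le> i" "i < n" for i
    proof -
      have "FF (rotate k xs) (i - k) > -1" using H that by auto
      moreover have "i - k \<le> n - k" "k + (i - k) = i" "i - k \<le> n" using that by auto
      ultimately show ?thesis using R[of "i-k"] by simp
    qed
    show "(\<forall>i<k. FF xs k < FF xs i) \<and> (\<forall>i. k \<le> i \<and> i < n \<longrightarrow> FF xs k \<le> FF xs i)"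
      using A B by auto
  next
    assume H: "(\<forall>i<k. FF xs k < FF xs i) \<and> (\<forall>i. k \<le> i \<and> i < n \<longrightarrow> FF xs k \<le> FF xs i)"
    show "\<forall>j<n. FF (rotate k xs) j > -1"
    proof (intro allI impI)
      fix j assume j: "j < n"
      show "FF (rotate k xs) j > -1"
      proof (cases "j \<le> n - k")
        case True
        show ?thesis
        proof (cases "k + j < n")
          case True
          have "FF (rotate k xs) j = FF xs (k+j) - FF xs k" using R[of j] j \<open>j \<le> n - k\<close> by simp
          moreover have "FF xs k \<le> FF xs (k+j)" using H True by simp
          ultimately show ?thesis by simp
        next
          case False
          then have "k + j = n" "0 < k" using \<open>j \<le> n - k\<close> j kn by auto
          have "FF (rotate k xs) j = FF xs n - FF xs k" using R[of j] j \<open>j \<le> n - k\<close> \<open>k + j = n\<close> by simp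
          moreover have "FF xs k < FF xs 0" using H \<open>0 < k\<close> by blast
          ultimately show ?thesis using Gn G0 by simp
        qed
      next
        case False
        then have "j + k - n < k" "0 < j + k - n" using j kn by auto
        have "FF (rotate k xs) j = FF xs n - FF xs k + FF xs (j + k - n)" using R[of j] j False by simp
        moreover have "FF xs k < FF xs (j + k - n)" using H \<open>j + k - n < k\<close> by blast
        ultimately show ?thesis using Gn by simp
      qed
    qed
  qed
  finally show ?thesis .
qed

lemma cyc_unique:
  fixes G :: "nat \<Rightarrow> int"
  assumes n: "n > 0"
  shows "\<exists>!k. k < n \<and> (\<forall>i<k. G k < G i) \<and> (\<forall>i. k \<le> i \<and> i < n \<longrightarrow> G k \<le> G i)"
proof -
  have fin: "finite (G ` {..<n})" by simp
  have ne: "G ` {..<n} \<noteq> {}" using n by blast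
  have "Min (G ` {..<n}) \<in> G ` {..<n}" by (rule Min_in[OF fin ne])
  then obtain k0 where k0: "k0 \<in> {..<n}" "Min (G ` {..<n}) = G k0" by (rule imageE)
  have "\<forall>i<n. G k0 \<le> G i"
  proof (intro allI impI)
    fix i assume "i < n"
    then have "G i \<in> G ` {..<n}" by blast
    then show "G k0 \<le> G i" using Min_le[OF fin, of "G i"] k0(2) by simp
  qed
  then have ex: "\<exists>k. k < n \<and> (\<forall>i<n. G k \<le> G i)" using k0(1) by auto
  obtain k where k: "k < n \<and> (\<forall>i<n. G k \<le> G i)" and kl: "\<forall>m<k. \<not> (m < n \<and> (\<forall>i<n. G m \<le> G i))"
    using ex exists_least_iff[of "\<lambda>k. k < n \<and> (\<forall>i<n. G k \<le> G i)"] by blast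
  have P1: "\<forall>i<k. G k < G i"
  proof (intro allI impI)
    fix i assume ik: "i < k"
    then have "i < n" using k by linarith
    then obtain j where "j < n" "G j < G i" using kl ik by (meson not_le)
    then show "G k < G i" using k by (meson order.strict_trans1)
  qed
  have P2: "\<forall>i. k \<le> i \<and> i < n \<longrightarrow> G k \<le> G i" using k by blast
  show ?thesis
  proof (rule ex1I[of _ k])
    show "k < n \<and> (\<forall>i<k. G k < G i) \<and> (\<forall>i. k \<le> i \<and> i < n \<longrightarrow> G k \<le> G i)" using k P1 P2 by blast
  next
    fix k' assume h: "k' < n \<and> (\<forall>i<k'. G k' < G i) \<and> (\<forall>i. k' \<le> i \<and> i < n \<longrightarrow> G k' \<le> G i)"
    show "k' = k"
    proof (rule linorder_cases[of k' k])
      assume a: "k' < k"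
      have "G k < G k'" using P1 a by blast
      moreover have "G k' \<le> G k" using h a k by (meson less_imp_le)
      ultimately show ?thesis by simp
    next
      assume a: "k < k'"
      have "G k' < G k" using h a by blast
      moreover have "G k \<le> G k'" using P2 a h by (meson less_imp_le)
      ultimately show ?thesis by simp
    qed
  qed
qed

lemma rot_count:
  fixes w :: "nat list \<Rightarrow> real"
  assumes len: "length xs = n" and n: "n > 0" and s: "sum_list xs + 1 = n"
    and winv: "\<And>xs k. w (rotate k xs) = w xs"
  shows "(\<Sum>k<n. if code 1 (rotate k xs) then w (rotate k xs) else 0) = w xs"
proof -
  obtain k0 where k0: "k0 < n \<and> (\<forall>i<k0. FF xs k0 < FF xs i) \<and> (\<forall>i. k0 \<le> i \<and> i < n \<longrightarrow> FF xs k0 \<le> FF xs i)"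
    and u: "\<And>k. k < n \<and> (\<forall>i<k. FF xs k < FF xs i) \<and> (\<forall>i. k \<le> i \<and> i < n \<longrightarrow> FF xs k \<le> FF xs i) \<Longrightarrow> k = k0"
    using cyc_unique[OF n, of "FF xs"] by metis
  have "(\<Sum>k<n. if code 1 (rotate k xs) then w (rotate k xs) else 0) = (\<Sum>k<n. if k = k0 then w xs else 0)"
  proof (rule sum.cong)
    fix k assume "k \<in> {..<n}"
    then have "k < n" by simp
    then have "code 1 (rotate k xs) \<longleftrightarrow> k = k0" using code_rot[OF len _ s] u k0 by metis
    then show "(if code 1 (rotate k xs) then w (rotate k xs) else 0) = (if k = k0 then w xs else 0)"
      using winv by simp
  qed simp
  also have "\<dots> = w xs" using k0 by simp
  finally show ?thesis .
qed

lemma cycle_sum: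
  fixes w :: "nat list \<Rightarrow> real"
  assumes fin: "finite S" and len: "\<And>xs. xs \<in> S \<Longrightarrow> length xs = n \<and> sum_list xs + 1 = n"
    and rot: "\<And>xs k. xs \<in> S \<Longrightarrow> rotate k xs \<in> S" and winv: "\<And>xs k. w (rotate k xs) = w xs"
    and n: "n > 0"
  shows "sum w S = real n * sum w {xs\<in>S. code 1 xs}"
proof -
  define g where "g xs = (if code 1 xs then w xs else 0)" for xs
  have "sum w S = (\<Sum>xs\<in>S. \<Sum>k<n. g (rotate k xs))"
    using rot_count[OF _ n _ winv] len unfolding g_def by (intro sum.cong) auto
  also have "\<dots> = (\<Sum>k<n. \<Sum>xs\<in>S. g (rotate k xs))" by (rule sum.swap)
  also have "\<dots> = (\<Sum>k<n. \<Sum>xs\<in>S. g xs)"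
  proof (rule sum.cong)
    fix k
    have inj: "inj_on (rotate k) S" by (meson inj_onI rotate_inj)
    have im: "rotate k ` S = S" using endo_inj_surj[OF fin _ inj] rot by blast
    show "(\<Sum>xs\<in>S. g (rotate k xs)) = (\<Sum>xs\<in>S. g xs)"
      using sum.reindex[OF inj, of g] im by simp
  qed simp
  also have "\<dots> = real n * sum g S" by simp
  also have "sum g S = sum w {xs\<in>S. code 1 xs}" unfolding g_def using fin by (simp add: sum.inter_filter)
  finally show ?thesis .
qed

lemma pmf_step: "pmf (step_pmf \<mu>) i = (if -1 \<le> i then pmf \<mu> (nat (i+1)) else 0)"
proof (cases "-1 \<le> i")
  case True
  have "(\<lambda>k. int k - 1) -` {i} = {nat (i+1)}" using True by auto
  then show ?thesis using True by (simp add: step_pmf_def pmf_map measure_pmf_single)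
next
  case False
  have "(\<lambda>k. int k - 1) -` {i} = {}" using False by auto
  then show ?thesis using False by (simp add: step_pmf_def pmf_map)
qed

lemma pmf_step_nat: "pmf (step_pmf \<mu>) (int k - 1) = pmf \<mu> k"
  by (simp add: pmf_step)

lemma meas_step: "measure_pmf.prob (step_pmf \<mu>) {i. i < int N} = measure_pmf.prob \<mu> {0..N}"
proof -
  have "(\<lambda>k. int k - 1) -` {i. i < int N} = {0..N}" by auto
  then show ?thesis by (simp add: step_pmf_def)
qed

locale cfg =
  fixes \<mu> :: "nat pmf" and N :: nat
  assumes ppos: "measure_pmf.prob \<mu> {0..N} > 0"
begin

definition "p = measure_pmf.prob \<mu> {0..N}"
definition "q = cond_pmf (step_pmf \<mu>) {i. i < int N}"

lemma ne: "set_pmf (step_pmf \<mu>) \<inter> {i. i < int N} \<noteq> {}"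
  using ppos meas_step[of \<mu> N] measure_pmf_zero_iff[of "step_pmf \<mu>" "{i. i < int N}"] by auto

lemma pmf_q: "pmf q i = (if i < int N then pmf (step_pmf \<mu>) i / p else 0)"
  unfolding q_def p_def using pmf_cond[OF ne] meas_step[of \<mu> N] by simp

lemma pmf_q_nat: "pmf q (int k - 1) = (if k \<le> N then pmf \<mu> k / p else 0)"
  by (simp add: pmf_q pmf_step_nat)

lemma set_q: "set_pmf q \<subseteq> (\<lambda>k. int k - 1) ` {0..N}"
proof
  fix i assume "i \<in> set_pmf q"
  then have "i \<in> set_pmf (step_pmf \<mu>)" "i < int N" unfolding q_def using ne by auto
  then have "-1 \<le> i" by (auto simp: step_pmf_def)
  then have "i = int (nat (i+1)) - 1" "nat (i+1) \<in> {0..N}" using \<open>i < int N\<close> by auto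
  then show "i \<in> (\<lambda>k. int k - 1) ` {0..N}" by blast
qed

definition "LL m = {xs. set xs \<subseteq> {0..N} \<and> length xs = m}"

lemma finite_LL: "finite (LL m)"
  unfolding LL_def by (rule finite_lists_length_eq) simp

lemma iid_pmf:
  "pmf (iid_sum q m) s = (\<Sum>xs\<in>LL m. if int (sum_list xs) - int m = s then prod_list (map (pmf \<mu>) xs) else 0) / p^m"
proof (induction m arbitrary: s)
  case 0
  have "LL 0 = {[]}" unfolding LL_def by auto
  then show ?case by (auto simp: indicator_def)
next
  case (Suc m)
  define g where "g k ys = (if int (sum_list ys) - int m = s - int k + 1 then pmf \<mu> k * prod_list (map (pmf \<mu>) ys) else 0)" for k ys
  have inj: "inj_on (\<lambda>k::nat. int k - 1) {0..N}" by (auto simp: inj_on_def)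
  have "pmf (iid_sum q (Suc m)) s = (\<integral>x. pmf (iid_sum q m) (s - x) \<partial>measure_pmf q)"
  proof -
    have "pmf (map_pmf ((+) x) (iid_sum q m)) s = pmf (iid_sum q m) (s - x)" for x
      using pmf_map_inj'[of "(+) x" "iid_sum q m" "s - x"] by (simp add: inj_def)
    then show ?thesis by (simp add: pmf_bind)
  qed
  also have "\<dots> = (\<Sum>a\<in>(\<lambda>k. int k - 1) ` {0..N}. pmf (iid_sum q m) (s - a) * pmf q a)"
    by (rule integral_measure_pmf_real) (use set_q in auto)
  also have "\<dots> = (\<Sum>k\<in>{0..N}. pmf (iid_sum q m) (s - int k + 1) * (pmf \<mu> k / p))"
    by (subst sum.reindex[OF inj]) (simp add: pmf_q_nat algebra_simps)
  also have "\<dots> = (\<Sum>k\<in>{0..N}. \<Sum>ys\<in>LL m. g k ys) / p ^ Suc m"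
  proof -
    have pp: "p > 0" using ppos p_def by simp
    have "pmf (iid_sum q m) (s - int k + 1) * (pmf \<mu> k / p) = (\<Sum>ys\<in>LL m. g k ys) / p ^ Suc m" for k
    proof -
      have "(\<Sum>ys\<in>LL m. g k ys) = pmf \<mu> k * (\<Sum>ys\<in>LL m. if int (sum_list ys) - int m = s - int k + 1 then prod_list (map (pmf \<mu>) ys) else 0)"
        by (auto simp: g_def sum_distrib_left intro!: sum.cong)
      then show ?thesis using pp by (simp add: Suc.IH field_simps)
    qed
    then show ?thesis by (simp add: sum_divide_distrib)
  qed
  also have "(\<Sum>k\<in>{0..N}. \<Sum>ys\<in>LL m. g k ys) = (\<Sum>ys\<in>LL m. \<Sum>k\<in>{0..N}. g k ys)"
    by (rule sum.swap)
  also have "\<dots> = (\<Sum>(ys,k)\<in>LL m \<times> {0..N}. g k ys)"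
    by (simp add: sum.cartesian_product)
  also have "\<dots> = (\<Sum>xs\<in>LL (Suc m). if int (sum_list xs) - int (Suc m) = s then prod_list (map (pmf \<mu>) xs) else 0)"
  proof -
    have e: "LL (Suc m) = (\<lambda>(xs, n). n#xs) ` (LL m \<times> {0..N})"
      unfolding LL_def by (rule lists_length_Suc_eq)
    have i: "inj_on (\<lambda>(xs, n). n#xs) (LL m \<times> {0..N})" by (auto simp: inj_on_def)
    show ?thesis unfolding e sum.reindex[OF i] by (intro sum.cong) (auto simp: g_def)
  qed
  finally show ?case .
qed

end

lemma rot_inj_aux:
  assumes kj: "k \<le> j" and jl: "j < length b" and eq: "rotate k a = rotate j b"
    and a: "a = c # ys" and b: "b = c # ys'" and c: "c \<notin> set ys'"
  shows "k = j \<and> ys = ys'"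
proof -
  have "rotate j b = rotate k (rotate (j - k) b)" using kj by (simp add: rotate_rotate)
  then have ar: "a = rotate (j - k) b" using eq rotate_inj by metis
  have "a ! 0 = b ! (j - k)" using ar jl by (simp add: nth_rotate b)
  then have "j - k = 0"
  proof (cases "j - k")
    case (Suc m)
    assume "a ! 0 = b ! (j - k)"
    then have "c = ys' ! m" using a b Suc by simp
    moreover have "m < length ys'" using Suc jl b by simp
    ultimately show ?thesis using c nth_mem by metis
  qed simp
  then have "k = j" using kj by simp
  then show ?thesis using ar a b by simp
qed

lemma w_rot: "prod_list (map f (rotate k xs)) = prod_list (map (f :: nat \<Rightarrow> real) xs)"
  unfolding rotate_map[symmetric] by (rule prod_list_rotate)

lemma code1_sum: "code 1 xs \<Longrightarrow> sum_list xs + 1 = length xs"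
  using code_iff[of 1 xs] sum_hh[of xs] by simp

theorem mainTheorem16:
  fixes \<mu> :: "nat pmf" and N n :: nat
  assumes "measure_pmf.prob \<mu> {0..N} > 0"
    and "n > N + 1"
    and "Tn_defined \<mu> n"
    and "real n * pmf (step_pmf \<mu>) (int N)
           * pmf (iid_sum (cond_pmf (step_pmf \<mu>) {i. i < int N}) (n - 1)) (- int N - 1) > 0"
  shows "prob_maxdeg_le \<mu> n N
    \<le> pmf (iid_sum (cond_pmf (step_pmf \<mu>) {i. i < int N}) n) (-1)
      / (real n * pmf (step_pmf \<mu>) (int N)
           * pmf (iid_sum (cond_pmf (step_pmf \<mu>) {i. i < int N}) (n - 1)) (- int N - 1))"
proof -
  interpret cfg \<mu> N by unfold_locales (rule assms(1))
  define w where "w xs = prod_list (map (pmf \<mu>) xs)" for xs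
  have winv: "w (rotate k xs) = w xs" for k xs unfolding w_def by (rule w_rot)
  have wnn: "w xs \<ge> 0" for xs unfolding w_def by (induction xs) auto
  have n0: "n > 0" using assms(2) by simp
  have pp: "p > 0" "p \<le> 1" using assms(1) p_def by auto
  define C where "C = pmf (iid_sum q n) (-1)"
  define D where "D = pmf (iid_sum q (n - 1)) (- int N - 1)"
  define m1 where "m1 = pmf \<mu> (Suc N)"
  have m1: "pmf (step_pmf \<mu>) (int N) = m1" 
  proof -
    have e: "int N + 1 = int (Suc N)" by simp
    show ?thesis unfolding m1_def pmf_step e nat_int by simp
  qed
  define A where "A = (\<Sum>t\<in>{t. nverts t = n \<and> maxdeg t \<le> N}. gw_weight \<mu> t)"
  define B where "B = (\<Sum>t\<in>{t. nverts t = n}. gw_weight \<mu> t)"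
  have Bpos: "B > 0" using assms(3) unfolding B_def Tn_defined_def .
  have goal_eq: "prob_maxdeg_le \<mu> n N = A / B" unfolding prob_maxdeg_le_def A_def B_def by simp
  have dpos: "real n * m1 * D > 0" using assms(4) m1 unfolding D_def q_def by simp
  have Cnn: "C \<ge> 0" unfolding C_def by simp
  have Dnn: "D \<ge> 0" unfolding D_def by simp
  have m1nn: "m1 \<ge> 0" unfolding m1_def by simp
  have treesum: "(\<Sum>t\<in>{t. nverts t = n \<and> P (preF [t])}. gw_weight \<mu> t) = sum w {xs. code 1 xs \<and> length xs = n \<and> P xs}" for P
  proof -
    have "(\<Sum>t\<in>{t. nverts t = n \<and> P (preF [t])}. gw_weight \<mu> t) = (\<Sum>t\<in>{t. nverts t = n \<and> P (preF [t])}. w (preF [t]))"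
      unfolding w_def using prod_preF[of \<mu> "[_]"] by simp
    also have "\<dots> = sum w {xs. code 1 xs \<and> length xs = n \<and> P xs}"
      by (rule sum.reindex_bij_betw[OF tree_bij])
    finally show ?thesis .
  qed
  define SA where "SA = {xs\<in>LL n. sum_list xs + 1 = n}"
  have finSA: "finite SA" unfolding SA_def using finite_LL by simp
  have "A = sum w {xs. code 1 xs \<and> length xs = n \<and> (\<forall>x\<in>set xs. x \<le> N)}"
    unfolding A_def using treesum[of "\<lambda>xs. \<forall>x\<in>set xs. x \<le> N"] set_preF[of "[_]" N] by simp
  also have "{xs. code 1 xs \<and> length xs = n \<and> (\<forall>x\<in>set xs. x \<le> N)} = {xs\<in>SA. code 1 xs}"
    unfolding SA_def LL_def using code1_sum by auto
  finally have A1: "A = sum w {xs\<in>SA. code 1 xs}" .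
  have "sum w SA = real n * sum w {xs\<in>SA. code 1 xs}"
    by (rule cycle_sum[OF finSA _ _ winv n0]) (auto simp: SA_def LL_def sum_list_rotate)
  moreover have "C = sum w SA / p ^ n"
  proof -
    have "C = (\<Sum>xs\<in>LL n. if int (sum_list xs) - int n = -1 then w xs else 0) / p ^ n"
      unfolding C_def iid_pmf w_def by simp
    also have "(\<Sum>xs\<in>LL n. if int (sum_list xs) - int n = -1 then w xs else 0) = sum w SA"
      unfolding SA_def using finite_LL by (simp add: sum.inter_filter) (intro sum.cong, auto)
    finally show ?thesis .
  qed
  ultimately have Aeq: "A = p ^ n * C / real n" using A1 pp n0 by (simp add: field_simps)
  define T where "T = {xs. code 1 xs \<and> length xs = n \<and> True}"
  have B1: "B = sum w T" unfolding B_def T_def using treesum[of "\<lambda>_. True"] by simp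
  have finT: "finite T"
  proof (rule finite_subset)
    show "T \<subseteq> {xs. set xs \<subseteq> {0..n} \<and> length xs = n}"
    proof
      fix xs assume "xs \<in> T"
      then have "sum_list xs + 1 = n" "length xs = n" unfolding T_def using code1_sum by auto
      then show "xs \<in> {xs. set xs \<subseteq> {0..n} \<and> length xs = n}"
        using member_le_sum_list[of _ xs] by fastforce
    qed
    show "finite {xs. set xs \<subseteq> {0..n} \<and> length xs = n}" by (rule finite_lists_length_eq) simp
  qed
  define Y where "Y = {ys\<in>LL (n - 1). sum_list ys + N + 2 = n}"
  have finY: "finite Y" unfolding Y_def using finite_LL by simp
  have Deq: "D = sum w Y / p ^ (n - 1)"
  proof -
    have "D = (\<Sum>xs\<in>LL (n-1). if int (sum_list xs) - int (n-1) = - int N - 1 then w xs else 0) / p ^ (n-1)"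
      unfolding D_def iid_pmf w_def by simp
    also have "(\<Sum>xs\<in>LL (n-1). if int (sum_list xs) - int (n-1) = - int N - 1 then w xs else 0) = sum w Y"
      unfolding Y_def using finite_LL assms(2) by (simp add: sum.inter_filter) (intro sum.cong, auto)
    finally show ?thesis .
  qed
  define h where "h = (\<lambda>(k::nat, ys). rotate k (Suc N # ys))"
  define SB where "SB = h ` ({..<n} \<times> Y)"
  have finSB: "finite SB" unfolding SB_def using finY by simp
  have injh: "inj_on h ({..<n} \<times> Y)"
  proof (rule inj_onI)
    fix x y assume x: "x \<in> {..<n} \<times> Y" and y: "y \<in> {..<n} \<times> Y" and e: "h x = h y"
    obtain k ys where xk: "x = (k, ys)" by (cases x)
    obtain j ys' where yj: "y = (j, ys')" by (cases y)
    have ys: "length ys = n - 1" "set ys \<subseteq> {0..N}" using x xk unfolding Y_def LL_def by auto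
    have ys': "length ys' = n - 1" "set ys' \<subseteq> {0..N}" using y yj unfolding Y_def LL_def by auto
    have nin: "Suc N \<notin> set ys" "Suc N \<notin> set ys'" using ys ys' by auto
    have kn: "k < n" "j < n" using x y xk yj by auto
    have e': "rotate k (Suc N # ys) = rotate j (Suc N # ys')" using e xk yj h_def by simp
    show "x = y"
    proof (cases "k \<le> j")
      case True
      then show ?thesis using rot_inj_aux[OF True _ e' refl refl nin(2)] kn ys' n0 xk yj by simp
    next
      case False
      then show ?thesis using rot_inj_aux[where k=j and j=k and a="Suc N # ys'" and b="Suc N # ys", OF _ _ e'[symmetric] refl refl nin(1)] kn ys n0 xk yj by simp
    qed
  qed
  have SBmem: "length xs = n \<and> sum_list xs + 1 = n" if "xs \<in> SB" for xs
    using that assms(2) unfolding SB_def h_def Y_def LL_def by (auto simp: sum_list_rotate)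
  have SBrot: "rotate j xs \<in> SB" if xsSB: "xs \<in> SB" for xs j
  proof -
    obtain k ys where k: "k < n" "ys \<in> Y" "xs = rotate k (Suc N # ys)"
      using xsSB unfolding SB_def h_def by auto
    have len: "length (Suc N # ys) = n" using k(2) n0 unfolding Y_def LL_def by auto
    have "rotate j xs = rotate ((j + k) mod n) (Suc N # ys)"
      using k(3) len by (simp add: rotate_rotate rotate_conv_mod[of "j+k"])
    moreover have "(j + k) mod n < n" using n0 by simp
    ultimately show ?thesis using k(2) unfolding SB_def h_def by force
  qed
  have "sum w SB = real n * sum w {xs\<in>SB. code 1 xs}"
    by (rule cycle_sum[OF finSB _ _ winv n0]) (use SBmem SBrot in auto)
  moreover have "sum w SB = real n * m1 * sum w Y"
  proof -
    have "sum w SB = (\<Sum>x\<in>{..<n} \<times> Y. w (h x))" unfolding SB_def using sum.reindex[OF injh, of w] by (simp add: comp_def)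
    also have "\<dots> = (\<Sum>k<n. \<Sum>ys\<in>Y. w (h (k, ys)))"
      by (simp add: sum.cartesian_product)
    also have "\<dots> = (\<Sum>k<n. \<Sum>ys\<in>Y. m1 * w ys)"
    proof -
      have "w (h (k, ys)) = m1 * w ys" for k ys
      proof -
        have "w (h (k, ys)) = w (Suc N # ys)" unfolding h_def using winv by simp
        also have "\<dots> = m1 * w ys" by (simp add: w_def m1_def)
        finally show ?thesis .
      qed
      then show ?thesis by simp
    qed
    also have "\<dots> = real n * m1 * sum w Y" by (simp add: sum_distrib_left mult.assoc)
    finally show ?thesis .
  qed
  moreover have "sum w {xs\<in>SB. code 1 xs} \<le> B"
    unfolding B1 by (rule sum_mono2[OF finT]) (use SBmem wnn in \<open>auto simp: T_def\<close>)
  ultimately have Bge: "m1 * sum w Y \<le> B" using n0 by (simp add: mult.assoc)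
  have ppos': "p ^ (n - 1) > 0" using pp by simp
  have pD: "p ^ (n - 1) * D = sum w Y" using Deq ppos' pp by simp
  have Bge2: "m1 * p ^ (n - 1) * D \<le> B" using Bge pD by (simp add: mult.assoc)
  have pn: "p ^ n = p * p ^ (n - 1)" using n0 by (cases n) simp_all
  have m1D: "m1 * D > 0" using dpos n0 by (metis mult.assoc zero_less_mult_pos of_nat_0_less_iff)
  have e1: "m1 * p ^ (n - 1) * D = (m1 * D) * p ^ (n - 1)" by (simp add: algebra_simps)
  have pos2: "m1 * p ^ (n - 1) * D > 0" unfolding e1 using m1D ppos' by (rule mult_pos_pos)
  have Ann: "A \<ge> 0" unfolding Aeq using Cnn pp by simp
  have "A / B \<le> A / (m1 * p ^ (n - 1) * D)"
    by (rule divide_left_mono[OF Bge2 Ann]) (rule mult_pos_pos[OF Bpos pos2])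
  also have "\<dots> = p * C / (real n * m1 * D)"
  proof -
    have nz: "m1 \<noteq> 0" "D \<noteq> 0" "p ^ (n - 1) \<noteq> 0" "real n \<noteq> 0" using m1D ppos' n0 pp by auto
    show ?thesis unfolding Aeq pn using nz by (simp add: field_simps)
  qed
  also have "\<dots> \<le> C / (real n * m1 * D)"
    by (rule divide_right_mono[OF mult_left_le_one_le[OF Cnn _ pp(2)]]) (use pp dpos in auto)
  finally show ?thesis unfolding goal_eq C_def D_def q_def m1[symmetric] by simp
qed

end
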